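(* Let $V$ be a finite dimensional real vector space and $n\in\mathbb N$. For $1\le k\le n$ let $\Gamma_k$ be a finitely generated cone in $V$ and $B_k$ a compact subset of $V$. Then there exists a compact subset $B$ of $V$ such that $$\bigcap_{k=1}^n(B_k+\Gamma_k)\subseteq B+\bigcap_{k=1}^n\Gamma_k.$$
   Context: A cone $\Gamma\subseteq V$ is finitely generated if there are finitely many $\omega_1,\dots,\omega_m\in V$ with $\Gamma=\sum_{j=1}^m\mathbb R_{\ge0}\omega_j$. *)

theory Defs
  imports "HOL-Analysis.Analysis"
begin

definition finitely_generated_cone :: "'a::real_vector set \<Rightarrow> bool" where
  "finitely_generated_cone C \<longleftrightarrow>
     (\<exists>m::nat. \<exists>\<omega>::nat \<Rightarrow> 'a.
        C = {x. \<exists>c::nat \<Rightarrow> real. (\<forall>j<m. c j \<ge> 0) \<and> x = (\<Sum>j<m. c j *\<^sub>R \<omega> j)})"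

end

theory Submission
  imports Defs
begin

lemma sum_in_cone:
  fixes m :: nat
  assumes "convex_cone K" "\<And>j. j < m \<Longrightarrow> f j \<in> K"
  shows "(\<Sum>j<m. f j) \<in> K"
  using assms(2)
proof (induction m)
  case 0 then show ?case using assms(1) by (simp add: convex_cone_contains_0)
next
  case (Suc m) then show ?case using assms(1) by (simp add: convex_cone_add)
qed

lemma fg_eq_hull:
  fixes \<omega> :: "nat \<Rightarrow> 'a::real_vector"
  shows "{x. \<exists>c::nat\<Rightarrow>real. (\<forall>j<m. c j \<ge> 0) \<and> x = (\<Sum>j<m. c j *\<^sub>R \<omega> j)} = convex_cone hull (\<omega> ` {..<m})"
  (is "?G = ?H")
proof
  show "?G \<subseteq> ?H"
  proof
    fix x assume "x \<in> ?G"
    then obtain c where c: "\<forall>j<m. c j \<ge> 0" "x = (\<Sum>j<m. c j *\<^sub>R \<omega> j)" by blast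
    have "(\<Sum>j<m. c j *\<^sub>R \<omega> j) \<in> ?H"
      by (rule sum_in_cone) (auto simp: convex_cone_convex_cone_hull c intro!: convex_cone_hull_mul[OF hull_inc])
    then show "x \<in> ?H" using c by simp
  qed
  show "?H \<subseteq> ?G"
  proof (rule hull_minimal)
    show "\<omega> ` {..<m} \<subseteq> ?G"
    proof
      fix x assume "x \<in> \<omega> ` {..<m}"
      then obtain i where i: "i < m" "x = \<omega> i" by blast
      have "(\<Sum>j<m. (if j = i then 1 else 0) *\<^sub>R \<omega> j) = \<omega> i"
      proof -
        have "(\<Sum>j<m. (if j = i then 1 else 0) *\<^sub>R \<omega> j) = (\<Sum>j<m. if j = i then \<omega> j else 0)"
          by (rule sum.cong) auto
        also have "\<dots> = \<omega> i" using i by (simp add: sum.delta')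
        finally show ?thesis .
      qed
      then show "x \<in> ?G" using i by (intro CollectI exI[of _ "\<lambda>j. if j = i then 1 else 0"]) auto
    qed
    show "convex_cone ?G"
      unfolding convex_cone_iff
    proof (intro conjI ballI allI impI)
      show "0 \<in> ?G" by (intro CollectI exI[of _ "\<lambda>j. 0"]) auto
    next
      fix x y assume "x \<in> ?G" "y \<in> ?G"
      then obtain c d where "\<forall>j<m. c j \<ge> 0" "x = (\<Sum>j<m. c j *\<^sub>R \<omega> j)"
          "\<forall>j<m. d j \<ge> 0" "y = (\<Sum>j<m. d j *\<^sub>R \<omega> j)" by blast
      then show "x + y \<in> ?G"
        by (intro CollectI exI[of _ "\<lambda>j. c j + d j"]) (auto simp: sum.distrib scaleR_add_left)
    next
      fix x and t :: real assume "x \<in> ?G" "0 \<le> t"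
      then obtain c where "\<forall>j<m. c j \<ge> 0" "x = (\<Sum>j<m. c j *\<^sub>R \<omega> j)" by blast
      then show "t *\<^sub>R x \<in> ?G" using \<open>0 \<le> t\<close>
        by (intro CollectI exI[of _ "\<lambda>j. t * c j"]) (auto simp: scaleR_sum_right)
    qed
  qed
qed

lemma polyhedral_cone:
  fixes C :: "'a::euclidean_space set"
  assumes "polyhedron C" "0 \<in> C" "\<And>x t. x \<in> C \<Longrightarrow> t \<ge> 0 \<Longrightarrow> t *\<^sub>R x \<in> C"
  shows "\<exists>A. finite A \<and> C = {x. \<forall>a\<in>A. a \<bullet> x \<le> 0}"
proof -
  obtain F where F: "finite F" "C = \<Inter>F" "\<forall>h\<in>F. \<exists>a b. a \<noteq> 0 \<and> h = {x. a \<bullet> x \<le> b}"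
    using assms(1) unfolding polyhedron_def by blast
  then obtain a b where ab: "\<And>h. h \<in> F \<Longrightarrow> h = {x. a h \<bullet> x \<le> b h}" by metis
  have b0: "b h \<ge> 0" if "h \<in> F" for h
  proof -
    have "0 \<in> h" using assms(2) F(2) that by blast
    then show ?thesis using ab[OF that] by (metis (no_types, lifting) inner_zero_right mem_Collect_eq)
  qed
  have "C = {x. \<forall>c\<in>a ` F. c \<bullet> x \<le> 0}"
  proof
    show "C \<subseteq> {x. \<forall>c\<in>a ` F. c \<bullet> x \<le> 0}"
    proof (clarify)
      fix x h assume x: "x \<in> C" and h: "h \<in> F"
      show "a h \<bullet> x \<le> 0"
      proof (rule ccontr)
        assume "\<not> a h \<bullet> x \<le> 0"
        then have pos: "a h \<bullet> x > 0" by simp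
        define t where "t = (b h + 1) / (a h \<bullet> x)"
        have "t \<ge> 0" using pos b0[OF h] by (simp add: t_def)
        then have "t *\<^sub>R x \<in> h" using assms(3)[OF x] F(2) h by blast
        then have "a h \<bullet> (t *\<^sub>R x) \<le> b h" using ab[OF h] by (metis (no_types, lifting) mem_Collect_eq)
        then have "t * (a h \<bullet> x) \<le> b h" by simp
        moreover have "t * (a h \<bullet> x) = b h + 1" using pos by (simp add: t_def)
        ultimately show False by simp
      qed
    qed
    show "{x. \<forall>c\<in>a ` F. c \<bullet> x \<le> 0} \<subseteq> C"
    proof
      fix x assume xa: "x \<in> {x. \<forall>c\<in>a ` F. c \<bullet> x \<le> 0}"
      have "\<forall>h\<in>F. x \<in> h"
      proof (intro ballI)
        fix h assume "h \<in> F"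
        with xa have "a h \<bullet> x \<le> b h" using b0[of h] by force
        then show "x \<in> h" using ab[OF \<open>h \<in> F\<close>] by (metis (no_types, lifting) mem_Collect_eq)
      qed
      then show "x \<in> C" using F(2) by blast
    qed
  qed
  then show ?thesis using F(1) by blast
qed

lemma farkas:
  fixes v :: "'a::euclidean_space"
  assumes "finite J" "\<And>p. (\<forall>a\<in>J. a \<bullet> p \<le> 0) \<Longrightarrow> v \<bullet> p \<le> 0"
  shows "v \<in> convex_cone hull J"
proof (rule ccontr)
  assume nv: "v \<notin> convex_cone hull J"
  obtain a b where ab: "a \<bullet> v < b" "\<forall>x\<in>convex_cone hull J. a \<bullet> x > b"
    using separating_hyperplane_closed_point[OF convex_convex_cone_hull closed_convex_cone_hull[OF assms(1)] nv]
    by blast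
  have b0: "b < 0" using ab(2) convex_cone_hull_contains_0 by fastforce
  have "a \<bullet> z \<ge> 0" if "z \<in> convex_cone hull J" for z
  proof (rule ccontr)
    assume "\<not> a \<bullet> z \<ge> 0"
    then have neg: "a \<bullet> z < 0" by simp
    define t where "t = b / (a \<bullet> z)"
    have "t \<ge> 0" using neg b0 by (simp add: t_def divide_nonpos_neg)
    then have "t *\<^sub>R z \<in> convex_cone hull J" using that by (rule convex_cone_hull_mul[rotated])
    then have "a \<bullet> (t *\<^sub>R z) > b" using ab(2) by blast
    moreover have "a \<bullet> (t *\<^sub>R z) = b" using neg by (simp add: t_def)
    ultimately show False by simp
  qed
  then have "\<forall>c\<in>J. c \<bullet> (-a) \<le> 0" by (auto intro: hull_inc simp: inner_commute)
  then have "v \<bullet> (-a) \<le> 0" by (rule assms(2))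
  then show False using ab(1) b0 by (simp add: inner_commute)
qed

lemma cone_bound:
  fixes J :: "'a::euclidean_space set"
  assumes "finite J"
  shows "\<exists>R\<ge>0. \<forall>v\<in>convex_cone hull J. (\<forall>a\<in>J. a \<bullet> v \<le> 1) \<longrightarrow> norm v \<le> R"
proof -
  let ?K = "convex_cone hull J"
  let ?S = "?K \<inter> sphere 0 1"
  define f where "f u = (\<Sum>a\<in>J. max 0 (a \<bullet> u))" for u
  have pos: "f u > 0" if "u \<in> ?K" "u \<noteq> 0" for u
  proof (rule ccontr)
    assume "\<not> f u > 0"
    then have "f u \<le> 0" by simp
    then have "\<forall>a\<in>J. max 0 (a \<bullet> u) = 0"
      unfolding f_def using sum_nonneg_eq_0_iff[OF assms, of "\<lambda>a. max 0 (a \<bullet> u)"]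
      by (smt (verit, ccfv_SIG) max.cobounded1 sum_nonneg)
    then have "\<forall>a\<in>J. a \<bullet> u \<le> 0" by (metis max.cobounded2)
    then have "J \<subseteq> {z. u \<bullet> z \<le> 0}" by (auto simp: inner_commute)
    then have "?K \<subseteq> {z. u \<bullet> z \<le> 0}"
      by (rule hull_minimal) (rule convex_cone_halfspace_le)
    then have "u \<bullet> u \<le> 0" using that(1) by blast
    then show False using that(2) inner_gt_zero_iff[of u] by linarith
  qed
  have hom: "f (c *\<^sub>R u) = c * f u" if "c \<ge> 0" for c u
  proof -
    have "max 0 (c * t) = c * max 0 t" for t :: real
      using that by (cases "t \<ge> 0") (auto simp: max_def mult_le_0_iff mult_nonneg_nonneg zero_le_mult_iff)
    then show ?thesis unfolding f_def by (simp add: sum_distrib_left)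
  qed
  have bnd: "f v \<le> real (card J)" if "\<forall>a\<in>J. a \<bullet> v \<le> 1" for v
  proof -
    have "f v \<le> real (card J) * 1"
      unfolding f_def by (rule sum_bounded_above) (use that in auto)
    then show ?thesis by simp
  qed
  show ?thesis
  proof (cases "?S = {}")
    case True
    have "v = 0" if "v \<in> ?K" for v
    proof (rule ccontr)
      assume "v \<noteq> 0"
      then have "(1 / norm v) *\<^sub>R v \<in> ?S"
        using that by (auto intro!: convex_cone_hull_mul)
      then show False using True by blast
    qed
    then show ?thesis by auto
  next
    case False
    have "compact ?S" by (intro closed_Int_compact closed_convex_cone_hull assms compact_sphere)
    moreover have "continuous_on ?S f" unfolding f_def by (intro continuous_intros)
    ultimately obtain u0 where u0: "u0 \<in> ?S" "\<And>u. u \<in> ?S \<Longrightarrow> f u0 \<le> f u"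
      using continuous_attains_inf[OF _ False] by blast
    define \<delta> where "\<delta> = f u0"
    have dpos: "\<delta> > 0" using pos u0(1) unfolding \<delta>_def by (metis IntD1 IntD2 mem_sphere_0 norm_zero zero_neq_one)
    show ?thesis
    proof (intro exI[of _ "real (card J) / \<delta>"] conjI ballI impI)
      show "0 \<le> real (card J) / \<delta>" using dpos by simp
    next
      fix v assume v: "v \<in> ?K" "\<forall>a\<in>J. a \<bullet> v \<le> 1"
      show "norm v \<le> real (card J) / \<delta>"
      proof (cases "v = 0")
        case True then show ?thesis using dpos by simp
      next
        case False
        define u where "u = (1 / norm v) *\<^sub>R v"
        have "u \<in> ?S" using v(1) False by (auto simp: u_def intro!: convex_cone_hull_mul)
        then have "\<delta> \<le> f u" using u0(2) by (simp add: \<delta>_def)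
        have "v = norm v *\<^sub>R u" using False by (simp add: u_def)
        then have "f v = norm v * f u" using hom by (metis norm_ge_zero)
        then have "norm v * \<delta> \<le> real (card J)"
          using bnd[OF v(2)] \<open>\<delta> \<le> f u\<close>
          by (smt (verit, ccfv_SIG) mult_left_mono norm_ge_zero)
        then show ?thesis using dpos by (simp add: field_simps)
      qed
    qed
  qed
qed

lemma hoffman1:
  fixes A :: "'a::euclidean_space set"
  assumes "finite A"
  shows "\<exists>R\<ge>0. \<forall>x. (\<forall>a\<in>A. a \<bullet> x \<le> 1) \<longrightarrow> (\<exists>y. (\<forall>a\<in>A. a \<bullet> y \<le> 0) \<and> norm (x - y) \<le> R)"
proof -
  have "\<forall>J\<in>Pow A. \<exists>R\<ge>0. \<forall>v\<in>convex_cone hull J. (\<forall>a\<in>J. a \<bullet> v \<le> 1) \<longrightarrow> norm v \<le> R"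
  proof
    fix J assume "J \<in> Pow A"
    then have "finite J" using finite_subset[OF _ assms] by blast
    then show "\<exists>R\<ge>0. \<forall>v\<in>convex_cone hull J. (\<forall>a\<in>J. a \<bullet> v \<le> 1) \<longrightarrow> norm v \<le> R"
      by (rule cone_bound)
  qed
  from bchoice[OF this] obtain Rf where Rf0: "\<forall>J\<in>Pow A. Rf J \<ge> 0 \<and>
      (\<forall>v\<in>convex_cone hull J. (\<forall>a\<in>J. a \<bullet> v \<le> 1) \<longrightarrow> norm v \<le> Rf J)"
    by blast
  then have Rf: "\<And>J. J \<in> Pow A \<Longrightarrow> Rf J \<ge> 0 \<and>
      (\<forall>v\<in>convex_cone hull J. (\<forall>a\<in>J. a \<bullet> v \<le> 1) \<longrightarrow> norm v \<le> Rf J)"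
    by blast
  define R where "R = sum Rf (Pow A)"
  have R0: "R \<ge> 0" unfolding R_def using Rf by (intro sum_nonneg) blast
  have "\<exists>y. (\<forall>a\<in>A. a \<bullet> y \<le> 0) \<and> norm (x - y) \<le> R" if hx: "\<forall>a\<in>A. a \<bullet> x \<le> 1" for x
  proof -
    define P0 where "P0 = (\<Inter>a\<in>A. {y. a \<bullet> y \<le> 0})"
    have memP0: "z \<in> P0 \<longleftrightarrow> (\<forall>a\<in>A. a \<bullet> z \<le> 0)" for z by (simp add: P0_def)
    have cl: "closed P0" unfolding P0_def by (intro closed_INT ballI closed_halfspace_le)
    have cv: "convex P0" unfolding P0_def by (intro convex_INT ballI convex_halfspace_le)
    have ne: "P0 \<noteq> {}" using memP0[of 0] by auto
    define y where "y = closest_point P0 x"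
    have yP: "y \<in> P0" using closest_point_in_set[OF cl ne] by (simp add: y_def)
    have ymin: "\<forall>z\<in>P0. dist x y \<le> dist x z" using closest_point_exists(2)[OF cl ne] by (simp add: y_def)
    define v where "v = x - y"
    have dot: "v \<bullet> (p - y) \<le> 0" if "p \<in> P0" for p
      unfolding v_def by (rule any_closest_point_dot[OF cv cl yP that ymin])
    define J where "J = {a\<in>A. a \<bullet> y = 0}"
    have JA: "J \<in> Pow A" by (auto simp: J_def)
    have fJ: "finite J" using assms by (simp add: J_def)
    have "v \<bullet> p \<le> 0" if hp: "\<forall>a\<in>J. a \<bullet> p \<le> 0" for p
    proof -
      have "\<forall>a\<in>A. \<forall>\<^sub>F e in at_right (0::real). a \<bullet> (y + e *\<^sub>R p) \<le> 0"
      proof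
        fix a assume aA: "a \<in> A"
        show "\<forall>\<^sub>F e in at_right (0::real). a \<bullet> (y + e *\<^sub>R p) \<le> 0"
        proof (cases "a \<in> J")
          case True
          then have h1: "a \<bullet> y = 0" "a \<bullet> p \<le> 0" using hp by (auto simp: J_def)
          show ?thesis
            using eventually_at_right_less[of "0::real"]
            by eventually_elim (simp add: h1 inner_add_right mult_nonneg_nonpos)
        next
          case False
          then have neg: "a \<bullet> y < 0" using aA yP memP0 by (force simp: J_def)
          have "((\<lambda>e. a \<bullet> (y + e *\<^sub>R p)) \<longlongrightarrow> a \<bullet> (y + 0 *\<^sub>R p)) (at_right 0)"
            by (intro tendsto_intros)
          then have "((\<lambda>e. a \<bullet> (y + e *\<^sub>R p)) \<longlongrightarrow> a \<bullet> y) (at_right 0)" by simp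
          from order_tendstoD(2)[OF this neg] show ?thesis
            by eventually_elim simp
        qed
      qed
      then have "\<forall>\<^sub>F e in at_right (0::real). \<forall>a\<in>A. a \<bullet> (y + e *\<^sub>R p) \<le> 0"
        by (rule eventually_ball_finite[OF assms])
      then have "\<forall>\<^sub>F e in at_right (0::real). 0 < e \<and> (\<forall>a\<in>A. a \<bullet> (y + e *\<^sub>R p) \<le> 0)"
        using eventually_at_right_less[of "0::real"] by eventually_elim simp
      then have "\<exists>e::real. 0 < e \<and> (\<forall>a\<in>A. a \<bullet> (y + e *\<^sub>R p) \<le> 0)"
        by (rule eventually_happens'[rotated]) simp
      then obtain e :: real where e: "0 < e" "\<forall>a\<in>A. a \<bullet> (y + e *\<^sub>R p) \<le> 0"
        by blast
      then have "y + e *\<^sub>R p \<in> P0" using memP0 by blast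
      then have "v \<bullet> (e *\<^sub>R p) \<le> 0" using dot by fastforce
      then have "e * (v \<bullet> p) \<le> 0" by simp
      then show ?thesis using e(1) by (simp add: mult_le_0_iff)
    qed
    then have vK: "v \<in> convex_cone hull J" by (intro farkas fJ) blast
    have "\<forall>a\<in>J. a \<bullet> v \<le> 1" using hx by (auto simp: J_def v_def inner_diff_right)
    then have "norm v \<le> Rf J" using Rf[OF JA] vK by blast
    also have "\<dots> \<le> R" unfolding R_def using Rf JA assms by (intro member_le_sum) auto
    finally show ?thesis using yP memP0 by (auto simp: v_def)
  qed
  then show ?thesis using R0 by blast
qed

lemma hoffman:
  fixes A :: "'a::euclidean_space set"
  assumes "finite A"
  shows "\<exists>R\<ge>0. \<forall>r>0. \<forall>x. (\<forall>a\<in>A. a \<bullet> x \<le> r) \<longrightarrow> (\<exists>y. (\<forall>a\<in>A. a \<bullet> y \<le> 0) \<and> norm (x - y) \<le> r * R)"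
proof -
  obtain R where R: "R \<ge> 0" "\<And>x. (\<forall>a\<in>A. a \<bullet> x \<le> 1) \<Longrightarrow> (\<exists>y. (\<forall>a\<in>A. a \<bullet> y \<le> 0) \<and> norm (x - y) \<le> R)"
    using hoffman1[OF assms] by blast
  have "\<exists>y. (\<forall>a\<in>A. a \<bullet> y \<le> 0) \<and> norm (x - y) \<le> r * R" if r: "r > 0" and hx: "\<forall>a\<in>A. a \<bullet> x \<le> r" for r x
  proof -
    have "\<forall>a\<in>A. a \<bullet> ((1/r) *\<^sub>R x) \<le> 1" using hx r by (simp add: divide_le_eq)
    then obtain y' where y': "\<forall>a\<in>A. a \<bullet> y' \<le> 0" "norm ((1/r) *\<^sub>R x - y') \<le> R" using R(2) by blast
    have "\<forall>a\<in>A. a \<bullet> (r *\<^sub>R y') \<le> 0" using y'(1) r by (simp add: mult_nonneg_nonpos)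
    moreover have "x - r *\<^sub>R y' = r *\<^sub>R ((1/r) *\<^sub>R x - y')" using r by (simp add: algebra_simps)
    then have "norm (x - r *\<^sub>R y') = r * norm ((1/r) *\<^sub>R x - y')" using r by simp
    then have "norm (x - r *\<^sub>R y') \<le> r * R" using y'(2) r by (simp add: mult_left_mono)
    ultimately show ?thesis by blast
  qed
  then show ?thesis using R(1) by blast
qed


theorem lemma3p13:
  fixes \<Gamma> Bk :: "nat \<Rightarrow> 'a::euclidean_space set" and n :: nat
  assumes "\<And>k. k \<in> {1..n} \<Longrightarrow> finitely_generated_cone (\<Gamma> k)"
      and "\<And>k. k \<in> {1..n} \<Longrightarrow> compact (Bk k)"
  shows "\<exists>B::'a set. compact B \<and>
           (\<Inter>k\<in>{1..n}. Bk k + \<Gamma> k) \<subseteq> B + (\<Inter>k\<in>{1..n}. \<Gamma> k)"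
proof -
  have "\<exists>A. finite A \<and> \<Gamma> k = {x. \<forall>a\<in>A. a \<bullet> x \<le> 0}" if k: "k \<in> {1..n}" for k
  proof -
    obtain m and \<omega> :: "nat \<Rightarrow> 'a" where
      "\<Gamma> k = {x. \<exists>c::nat \<Rightarrow> real. (\<forall>j<m. c j \<ge> 0) \<and> x = (\<Sum>j<m. c j *\<^sub>R \<omega> j)}"
      using assms(1)[OF k] unfolding finitely_generated_cone_def by blast
    then have G: "\<Gamma> k = convex_cone hull (\<omega> ` {..<m})" by (simp add: fg_eq_hull)
    show ?thesis unfolding G
    proof (rule polyhedral_cone)
      show "polyhedron (convex_cone hull (\<omega> ` {..<m}))"
        by (intro polyhedron_convex_cone_hull finite_imageI finite_lessThan)
      show "0 \<in> convex_cone hull (\<omega> ` {..<m})" by (rule convex_cone_hull_contains_0)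
      show "t *\<^sub>R x \<in> convex_cone hull (\<omega> ` {..<m})"
        if "x \<in> convex_cone hull (\<omega> ` {..<m})" "0 \<le> t" for x t
        using that by (rule convex_cone_hull_mul)
    qed
  qed
  then have "\<forall>k\<in>{1..n}. \<exists>A. finite A \<and> \<Gamma> k = {x. \<forall>a\<in>A. a \<bullet> x \<le> 0}" by blast
  from bchoice[OF this] obtain Af where Af0: "\<forall>k\<in>{1..n}. finite (Af k) \<and> \<Gamma> k = {x. \<forall>a\<in>Af k. a \<bullet> x \<le> 0}"
    by blast
  then have Af: "\<And>k. k \<in> {1..n} \<Longrightarrow> finite (Af k) \<and> \<Gamma> k = {x. \<forall>a\<in>Af k. a \<bullet> x \<le> 0}"
    by blast
  define A where "A = (\<Union>k\<in>{1..n}. Af k)"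
  have fA: "finite A" unfolding A_def
    by (rule finite_UN_I[OF finite_atLeastAtMost]) (use Af in blast)
  have Afm: "\<And>k x. k \<in> {1..n} \<Longrightarrow> x \<in> \<Gamma> k \<longleftrightarrow> (\<forall>a\<in>Af k. a \<bullet> x \<le> 0)"
    using Af by blast
  have Geq: "(\<Inter>k\<in>{1..n}. \<Gamma> k) = {x. \<forall>a\<in>A. a \<bullet> x \<le> 0}"
    unfolding A_def by (auto simp: Afm)
  have "compact (\<Union>k\<in>{1..n}. Bk k)" using assms(2) by (intro compact_UN) auto
  then have "bounded (\<Union>k\<in>{1..n}. Bk k)" by (rule compact_imp_bounded)
  then obtain M where M: "M > 0" "\<And>b. b \<in> (\<Union>k\<in>{1..n}. Bk k) \<Longrightarrow> norm b \<le> M"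
    unfolding bounded_pos by blast
  define r where "r = 1 + M * (\<Sum>a\<in>A. norm a)"
  have "0 \<le> M * (\<Sum>a\<in>A. norm a)" using M(1) by (intro mult_nonneg_nonneg sum_nonneg) auto
  then have r0: "r > 0" unfolding r_def by linarith
  obtain R where R: "R \<ge> 0" "\<And>x. (\<forall>a\<in>A. a \<bullet> x \<le> r) \<Longrightarrow> (\<exists>y. (\<forall>a\<in>A. a \<bullet> y \<le> 0) \<and> norm (x - y) \<le> r * R)"
    using hoffman[OF fA] r0 by blast
  show ?thesis
  proof (intro exI conjI)
    show "compact (cball (0::'a) (r * R))" by (rule compact_cball)
    show "(\<Inter>k\<in>{1..n}. Bk k + \<Gamma> k) \<subseteq> cball 0 (r * R) + (\<Inter>k\<in>{1..n}. \<Gamma> k)"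
    proof
      fix x assume x: "x \<in> (\<Inter>k\<in>{1..n}. Bk k + \<Gamma> k)"
      have "a \<bullet> x \<le> r" if aA: "a \<in> A" for a
      proof -
        obtain k where k: "k \<in> {1..n}" "a \<in> Af k" using aA unfolding A_def by blast
        have "x \<in> Bk k + \<Gamma> k" using x k(1) by blast
        then obtain b g where bg: "x = b + g" "b \<in> Bk k" "g \<in> \<Gamma> k" by (rule set_plus_elim)
        have "a \<bullet> g \<le> 0" using Af[OF k(1)] bg(3) k(2) by blast
        then have "a \<bullet> x \<le> a \<bullet> b" using bg(1) by (simp add: inner_add_right)
        also have "\<dots> \<le> norm a * norm b" by (rule norm_cauchy_schwarz)
        also have "\<dots> \<le> norm a * M" using M(2)[of b] bg(2) k(1) by (intro mult_left_mono) (blast, simp)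
        also have "\<dots> \<le> (\<Sum>a\<in>A. norm a) * M"
          using M(1) by (intro mult_right_mono member_le_sum fA aA) auto
        also have "\<dots> \<le> r" unfolding r_def by (simp add: mult.commute)
        finally show ?thesis .
      qed
      then obtain y where y: "\<forall>a\<in>A. a \<bullet> y \<le> 0" "norm (x - y) \<le> r * R" using R(2) by blast
      have "x = (x - y) + y" by simp
      moreover have "x - y \<in> cball 0 (r * R)" using y(2) by (simp add: dist_norm norm_minus_commute)
      moreover have "y \<in> (\<Inter>k\<in>{1..n}. \<Gamma> k)" using y(1) Geq by blast
      ultimately show "x \<in> cball 0 (r * R) + (\<Inter>k\<in>{1..n}. \<Gamma> k)" by (metis set_plus_intro)
    qed
  qed
qed

end
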